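(* Let $\ell$ be a positive integer. Any partial $(n,k,t)_\lambda$-system has an $\ell$-presequencing $(U_0,\ldots,U_{s-1})$ with $s=\lceil\sigma\rceil$, where \[ \sigma=\sigma(n,k,t,\lambda)=\left(e(2^k-1)\left(k\lambda\binom{n-1}{t-1}\binom{k-1}{t-1}^{-1}-k+1\right)\right)^{\frac{1}{k-1}} \] and $e$ is the base of the natural logarithm.
   Context: For positive integers $n,k,t,\lambda$ with $n \geq k > t \geq 2$, a partial $(n,k,t)_\lambda$-system is a pair $(X,\mathcal{B})$ where $X$ is an $n$-set of vertices and $\mathcal{B}$ is a collection of $k$-subsets of $X$ (blocks) such that each $t$-subset of $X$ is contained in at most $\lambda$ blocks. An independent set is a subset of $X$ containing no block. An $\ell$-buffered set is a triple $(S,S^{L},S^{R})$ with $S^{L},S^{R}\subseteq S$ (buffers) such that: (B1) if $|S|\le \ell-2$ then $S^{L}=S^{R}=S$; (B2) if $\ell-1\le |S|\le 2\ell-2$ then $|S^{L}|=|S^{R}|=\ell-1$ and $S^{L}\cup S^{R}=S$; (B3) if $|S|\ge 2\ell-1$ then $|S^{L}|=|S^{R}|=\ell-1$ and $S^{L}\cap S^{R}=\emptyset$. An $\ell$-presequencing of $(X,\mathcal{B})$ is a tuple $(X_0,\ldots,X_{s-1})$ of $\ell$-buffered sets (classes) whose underlying sets partition $X$, such that (P1) each $X_i$ is independent, and (P2) for each $i\in\mathbb{Z}_s$, $X_i^{R}\cup X_{i+1}^{L}$ is independent (indices mod $s$). *)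

theory Defs
  imports Complex_Main "HOL-Library.Multiset"
begin

definition partial_system ::
  "nat \<Rightarrow> nat \<Rightarrow> nat \<Rightarrow> nat \<Rightarrow> 'a set \<Rightarrow> 'a set multiset \<Rightarrow> bool" where
  "partial_system n k t lam X B \<longleftrightarrow>
     finite X \<and> card X = n \<and>
     (\<forall>b \<in># B. b \<subseteq> X \<and> card b = k) \<and>
     (\<forall>T. T \<subseteq> X \<and> card T = t \<longrightarrow> size (filter_mset (\<lambda>b. T \<subseteq> b) B) \<le> lam)"

definition independent :: "'a set multiset \<Rightarrow> 'a set \<Rightarrow> bool" where
  "independent B S \<longleftrightarrow> (\<forall>b \<in># B. \<not> b \<subseteq> S)"

definition buffered :: "nat \<Rightarrow> 'a set \<Rightarrow> 'a set \<Rightarrow> 'a set \<Rightarrow> bool" where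
  "buffered l S SL SR \<longleftrightarrow>
     SL \<subseteq> S \<and> SR \<subseteq> S \<and>
     (int (card S) \<le> int l - 2 \<longrightarrow> SL = S \<and> SR = S) \<and>
     (int l - 1 \<le> int (card S) \<and> int (card S) \<le> 2 * int l - 2 \<longrightarrow>
        card SL = l - 1 \<and> card SR = l - 1 \<and> SL \<union> SR = S) \<and>
     (2 * int l - 1 \<le> int (card S) \<longrightarrow>
        card SL = l - 1 \<and> card SR = l - 1 \<and> SL \<inter> SR = {})"

text \<open>An l-presequencing (U_0,...,U_{s-1}); class i is the triple U i = (S, S^L, S^R).
  Classes may be empty; indices are taken modulo s.\<close>
definition presequencing ::
  "nat \<Rightarrow> 'a set \<Rightarrow> 'a set multiset \<Rightarrow> nat \<Rightarrow> (nat \<Rightarrow> 'a set \<times> 'a set \<times> 'a set) \<Rightarrow> bool" where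
  "presequencing l X B s U \<longleftrightarrow>
     (\<forall>i<s. buffered l (fst (U i)) (fst (snd (U i))) (snd (snd (U i)))) \<and>
     (\<Union>i<s. fst (U i)) = X \<and>
     (\<forall>i<s. \<forall>j<s. i \<noteq> j \<longrightarrow> fst (U i) \<inter> fst (U j) = {}) \<and>
     (\<forall>i<s. independent B (fst (U i))) \<and>
     (\<forall>i<s. independent B (snd (snd (U i)) \<union> fst (snd (U ((i + 1) mod s)))))"

definition sigma :: "nat \<Rightarrow> nat \<Rightarrow> nat \<Rightarrow> nat \<Rightarrow> real" where
  "sigma n k t lam =
     (exp 1 * (2 ^ k - 1) *
       (real k * real lam * real ((n - 1) choose (t - 1)) / real ((k - 1) choose (t - 1))
        - real k + 1)) powr (1 / (real k - 1))"

end

theory Submission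
  imports Defs "HOL-Library.FuncSet"
begin



definition NN :: "'w set \<Rightarrow> ('i \<Rightarrow> 'w set) \<Rightarrow> 'i set \<Rightarrow> 'w set" where
  "NN \<Omega> A S = \<Omega> - \<Union>(A ` S)"

lemma NN_insert: "NN \<Omega> A (S \<union> insert j T) = NN \<Omega> A (S \<union> T) - A j"
  unfolding NN_def by auto

lemma lll_iter:
  assumes fin: "finite \<Omega>" and fT: "finite T" and y: "0 \<le> y" "y \<le> 1"
    and h: "\<And>T' j. T' \<subseteq> T \<Longrightarrow> j \<in> T - T' \<Longrightarrow>
         real (card (A j \<inter> NN \<Omega> A (S \<union> T'))) \<le> y * real (card (NN \<Omega> A (S \<union> T')))"
  shows "real (card (NN \<Omega> A (S \<union> T))) \<ge> (1 - y) ^ card T * real (card (NN \<Omega> A S))"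
  using fT h
proof (induction T rule: finite_induct)
  case empty then show ?case by simp
next
  case (insert j T)
  have IH: "real (card (NN \<Omega> A (S \<union> T))) \<ge> (1 - y) ^ card T * real (card (NN \<Omega> A S))"
    using insert.IH insert.prems by blast
  have hj: "real (card (A j \<inter> NN \<Omega> A (S \<union> T))) \<le> y * real (card (NN \<Omega> A (S \<union> T)))"
    using insert.prems[of T j] insert.hyps by blast
  have finN: "finite (NN \<Omega> A (S \<union> T))" using fin unfolding NN_def by auto
  have "card (NN \<Omega> A (S \<union> insert j T)) = card (NN \<Omega> A (S \<union> T)) - card (NN \<Omega> A (S \<union> T) \<inter> A j)"
    unfolding NN_insert using card_Diff_subset_Int finN by (metis Diff_Int2 Diff_Int_distrib2 card_Diff_subset inf.cobounded1 inf_idem finite_Int)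
  moreover have "card (NN \<Omega> A (S \<union> T) \<inter> A j) \<le> card (NN \<Omega> A (S \<union> T))"
    using finN by (simp add: card_mono)
  ultimately have "real (card (NN \<Omega> A (S \<union> insert j T))) = real (card (NN \<Omega> A (S \<union> T))) - real (card (A j \<inter> NN \<Omega> A (S \<union> T)))"
    by (simp add: Int_commute of_nat_diff)
  also have "\<dots> \<ge> (1 - y) * real (card (NN \<Omega> A (S \<union> T)))" using hj by (simp add: algebra_simps)
  finally have "real (card (NN \<Omega> A (S \<union> insert j T))) \<ge> (1 - y) * real (card (NN \<Omega> A (S \<union> T)))" .
  moreover have "(1 - y) * real (card (NN \<Omega> A (S \<union> T))) \<ge> (1 - y) * ((1 - y) ^ card T * real (card (NN \<Omega> A S)))"
    using IH y by (intro mult_left_mono) auto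
  ultimately show ?case using insert.hyps by simp
qed

lemma lll_claim:
  assumes fin: "finite \<Omega>" and fI: "finite I" and y: "0 \<le> y" "y \<le> 1"
    and finG: "\<And>i. i \<in> I \<Longrightarrow> finite (G i)"
    and dG: "\<And>i. i \<in> I \<Longrightarrow> card (G i) \<le> d"
    and ind: "\<And>i S. i \<in> I \<Longrightarrow> S \<subseteq> I - G i - {i} \<Longrightarrow>
        real (card (A i \<inter> NN \<Omega> A S)) \<le> p * real (card (NN \<Omega> A S))"
    and py: "p \<le> y * (1 - y) ^ d"
  shows "S \<subseteq> I \<Longrightarrow> i \<in> I \<Longrightarrow> i \<notin> S \<Longrightarrow>
      real (card (A i \<inter> NN \<Omega> A S)) \<le> y * real (card (NN \<Omega> A S))"
proof (induction "card S" arbitrary: S i rule: less_induct)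
  case less
  define S1 where "S1 = S \<inter> G i"
  define S2 where "S2 = S - G i"
  have fS: "finite S" using less.prems fI finite_subset by blast
  have S: "S = S2 \<union> S1" unfolding S1_def S2_def by auto
  have S2sub: "S2 \<subseteq> I - G i - {i}" using less.prems unfolding S2_def by auto
  have finN: "\<And>S. finite (NN \<Omega> A S)" using fin unfolding NN_def by auto
  have "real (card (A i \<inter> NN \<Omega> A S)) \<le> real (card (A i \<inter> NN \<Omega> A S2))"
    using finN by (intro of_nat_mono card_mono) (auto simp: NN_def S2_def)
  also have "\<dots> \<le> p * real (card (NN \<Omega> A S2))" using ind[OF less.prems(2) S2sub] .
  also have "\<dots> \<le> y * (1 - y) ^ d * real (card (NN \<Omega> A S2))"
    using py by (intro mult_right_mono) auto
  also have "\<dots> \<le> y * ((1 - y) ^ card S1 * real (card (NN \<Omega> A S2)))"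
  proof -
    have "card S1 \<le> d" using card_mono[OF finG[OF less.prems(2)], of S1] dG[OF less.prems(2)]
      unfolding S1_def by auto
    then have "(1 - y) ^ d \<le> (1 - y) ^ card S1" using y by (intro power_decreasing) auto
    then show ?thesis using y by (simp add: mult_left_mono mult_right_mono mult.assoc)
  qed
  also have "\<dots> \<le> y * real (card (NN \<Omega> A S))"
  proof -
    have "real (card (NN \<Omega> A (S2 \<union> S1))) \<ge> (1 - y) ^ card S1 * real (card (NN \<Omega> A S2))"
    proof (rule lll_iter[OF fin _ y])
      show "finite S1" using fS S1_def by auto
    next
      fix T' j assume T': "T' \<subseteq> S1" "j \<in> S1 - T'"
      show "real (card (A j \<inter> NN \<Omega> A (S2 \<union> T'))) \<le> y * real (card (NN \<Omega> A (S2 \<union> T')))"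
      proof (rule less.hyps)
        have "S2 \<union> T' \<subseteq> S - {j}" using T' unfolding S1_def S2_def by auto
        moreover have "j \<in> S" using T' unfolding S1_def by auto
        ultimately have "S2 \<union> T' \<subset> S" by auto
        then show "card (S2 \<union> T') < card S" using fS by (rule psubset_card_mono[rotated])
        show "S2 \<union> T' \<subseteq> I" using less.prems S2_def T' S1_def by auto
        show "j \<in> I" using T' less.prems S1_def by auto
        show "j \<notin> S2 \<union> T'" using T' S1_def S2_def by auto
      qed
    qed
    then show ?thesis using S y by (simp add: mult_left_mono)
  qed
  finally show ?case .
qed

lemma lll:
  assumes fin: "finite \<Omega>" and ne: "\<Omega> \<noteq> {}" and fI: "finite I" and y: "0 \<le> y" "y < 1"
    and finG: "\<And>i. i \<in> I \<Longrightarrow> finite (G i)"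
    and dG: "\<And>i. i \<in> I \<Longrightarrow> card (G i) \<le> d"
    and ind: "\<And>i S. i \<in> I \<Longrightarrow> S \<subseteq> I - G i - {i} \<Longrightarrow>
        real (card (A i \<inter> NN \<Omega> A S)) \<le> p * real (card (NN \<Omega> A S))"
    and py: "p \<le> y * (1 - y) ^ d"
  shows "NN \<Omega> A I \<noteq> {}"
proof -
  have "real (card (NN \<Omega> A ({} \<union> I))) \<ge> (1 - y) ^ card I * real (card (NN \<Omega> A {}))"
  proof (rule lll_iter[OF fin fI])
    show "0 \<le> y" "y \<le> 1" using y by auto
    fix T' j assume "T' \<subseteq> I" "j \<in> I - T'"
    then show "real (card (A j \<inter> NN \<Omega> A ({} \<union> T'))) \<le> y * real (card (NN \<Omega> A ({} \<union> T')))"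
      using lll_claim[OF fin fI _ _ finG dG ind py, where S=T' and i=j] y by auto
  qed
  moreover have "card (NN \<Omega> A {}) > 0" using fin ne by (simp add: NN_def card_gt_0_iff)
  moreover have "(1 - y) ^ card I > 0" using y by simp
  ultimately have "real (card (NN \<Omega> A I)) > 0"
  proof -
    assume a: "(1 - y) ^ card I * real (card (NN \<Omega> A {})) \<le> real (card (NN \<Omega> A ({} \<union> I)))"
      and b: "card (NN \<Omega> A {}) > 0" and c: "(1 - y) ^ card I > 0"
    have "(1 - y) ^ card I * real (card (NN \<Omega> A {})) > 0" using b c by simp
    then show ?thesis using a by simp
  qed
  then have "card (NN \<Omega> A I) > 0" by simp
  then show ?thesis by auto
qed

lemma exists_y:
  assumes "0 \<le> p" "exp 1 * p * (real d + 1) \<le> 1"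
  shows "\<exists>y::real. 0 \<le> y \<and> y < 1 \<and> p \<le> y * (1 - y) ^ d"
proof (cases "d = 0")
  case True
  have "exp 1 > (1::real)" by simp
  have h: "exp 1 * p \<le> 1" using assms True by simp
  have "p < 1"
  proof (rule ccontr)
    assume "\<not> p < 1"
    then have "exp 1 * 1 \<le> exp 1 * p" by (intro mult_left_mono) auto
    then show False using h \<open>exp 1 > 1\<close> by linarith
  qed
  then show ?thesis using True assms by (intro exI[of _ p]) auto
next
  case False
  define y where "y = 1 / (real d + 1)"
  have "(1 + 1 / real d) ^ d \<le> exp (1 / real d) ^ d"
    by (intro power_mono) (auto simp: add.commute)
  also have "\<dots> = exp 1" using False by (simp add: exp_of_nat_mult[symmetric])
  finally have e: "(1 + 1 / real d) ^ d \<le> exp 1" .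
  have "1 - y = 1 / (1 + 1 / real d)" using False unfolding y_def by (simp add: field_simps)
  then have "(1 - y) ^ d = 1 / (1 + 1 / real d) ^ d" by (simp add: power_divide)
  also have "\<dots> \<ge> 1 / exp 1"
  proof -
    have "(0::real) < 1 + 1 / real d" by (simp add: add_pos_nonneg)
    then have pos: "(1 + 1 / real d) ^ d > 0" by (rule zero_less_power)
    show ?thesis using e pos by (intro divide_left_mono) auto
  qed
  finally have h: "(1 - y) ^ d \<ge> 1 / exp 1" .
  have Epos: "exp 1 * (real d + 1) > 0" by (intro mult_pos_pos) auto
  have pE: "p * (exp 1 * (real d + 1)) \<le> 1" using assms(2) by (simp add: mult_ac)
  have "p \<le> 1 / (exp 1 * (real d + 1))" using pE by (subst pos_le_divide_eq[OF Epos])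
  also have "\<dots> = y * (1 / exp 1)" unfolding y_def by simp
  also have "\<dots> \<le> y * (1 - y) ^ d" using h unfolding y_def by (intro mult_left_mono) auto
  finally have "p \<le> y * (1 - y) ^ d" .
  moreover have "0 \<le> y" "y < 1" unfolding y_def using False by auto
  ultimately show ?thesis by blast
qed



lemma card_set_mset_le: "card (set_mset M) \<le> size M"
proof (induction M)
  case empty then show ?case by simp
next
  case (add x M)
  have "card (set_mset (add_mset x M)) \<le> Suc (card (set_mset M))"
    by (simp add: card_insert_le_m1)
  then show ?case using add by simp
qed

lemma card_subsets_containing:
  assumes "finite Y" "v \<in> Y" "t \<ge> 1"
  shows "card {T. T \<subseteq> Y \<and> v \<in> T \<and> card T = t} = (card Y - 1) choose (t - 1)"
proof -
  have "bij_betw (\<lambda>T. T - {v}) {T. T \<subseteq> Y \<and> v \<in> T \<and> card T = t} {T. T \<subseteq> Y - {v} \<and> card T = t - 1}"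
  proof (rule bij_betw_byWitness[where f'="insert v"])
    show "\<forall>a\<in>{T. T \<subseteq> Y \<and> v \<in> T \<and> card T = t}. insert v (a - {v}) = a" by auto
    show "\<forall>a\<in>{T. T \<subseteq> Y - {v} \<and> card T = t - 1}. insert v a - {v} = a" by auto
    show "(\<lambda>T. T - {v}) ` {T. T \<subseteq> Y \<and> v \<in> T \<and> card T = t} \<subseteq> {T. T \<subseteq> Y - {v} \<and> card T = t - 1}"
      using assms(1) by (auto dest: finite_subset)
    show "insert v ` {T. T \<subseteq> Y - {v} \<and> card T = t - 1} \<subseteq> {T. T \<subseteq> Y \<and> v \<in> T \<and> card T = t}"
    proof
      fix x assume "x \<in> insert v ` {T. T \<subseteq> Y - {v} \<and> card T = t - 1}"
      then obtain T where T: "T \<subseteq> Y - {v}" "card T = t - 1" "x = insert v T" by auto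
      have "finite T" using T assms(1) finite_subset by blast
      moreover have "v \<notin> T" using T by auto
      ultimately have "card x = t" using T assms by (simp add: card_insert_if)
      then show "x \<in> {T. T \<subseteq> Y \<and> v \<in> T \<and> card T = t}" using T assms by auto
    qed
  qed
  then have "card {T. T \<subseteq> Y \<and> v \<in> T \<and> card T = t} = card {T. T \<subseteq> Y - {v} \<and> card T = t - 1}"
    by (rule bij_betw_same_card)
  also have "\<dots> = card (Y - {v}) choose (t - 1)" using assms by (simp add: n_subsets)
  finally show ?thesis using assms by simp
qed

lemma card_filter_sum: "finite A \<Longrightarrow> card {x\<in>A. P x} = (\<Sum>x\<in>A. if P x then 1 else 0)"
  by (simp add: sum.If_cases Int_def)

lemma degree_bound:
  assumes ps: "partial_system n k t lam X B" and v: "v \<in> X" and t: "t \<ge> 1"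
  shows "card {b\<in>set_mset B. v \<in> b} * ((k - 1) choose (t - 1)) \<le> lam * ((n - 1) choose (t - 1))"
proof -
  define Bv where "Bv = {b\<in>set_mset B. v \<in> b}"
  define Tv where "Tv = {T. T \<subseteq> X \<and> v \<in> T \<and> card T = t}"
  have fX: "finite X" and cX: "card X = n" and bl: "\<And>b. b \<in># B \<Longrightarrow> b \<subseteq> X \<and> card b = k"
    and lamb: "\<And>T. T \<subseteq> X \<Longrightarrow> card T = t \<Longrightarrow> size (filter_mset (\<lambda>b. T \<subseteq> b) B) \<le> lam"
    using ps unfolding partial_system_def by auto
  have fBv: "finite Bv" unfolding Bv_def by auto
  have "Tv \<subseteq> Pow X" unfolding Tv_def by auto
  then have fTv: "finite Tv" using fX by (meson finite_Pow_iff finite_subset)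
  have "(\<Sum>b\<in>Bv. card {T\<in>Tv. T \<subseteq> b}) = (\<Sum>T\<in>Tv. card {b\<in>Bv. T \<subseteq> b})"
    using fBv fTv by (simp add: card_filter_sum sum.swap[of _ Bv])
  moreover have "(\<Sum>b\<in>Bv. card {T\<in>Tv. T \<subseteq> b}) = card Bv * ((k - 1) choose (t - 1))"
  proof -
    have "card {T\<in>Tv. T \<subseteq> b} = (k - 1) choose (t - 1)" if "b \<in> Bv" for b
    proof -
      have b: "b \<subseteq> X" "card b = k" "v \<in> b" using that bl unfolding Bv_def by auto
      have "{T\<in>Tv. T \<subseteq> b} = {T. T \<subseteq> b \<and> v \<in> T \<and> card T = t}" using b unfolding Tv_def by auto
      then show ?thesis using card_subsets_containing[of b v t] b t fX finite_subset by fastforce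
    qed
    then show ?thesis by simp
  qed
  moreover have "(\<Sum>T\<in>Tv. card {b\<in>Bv. T \<subseteq> b}) \<le> (\<Sum>T\<in>Tv. lam)"
  proof (rule sum_mono)
    fix T assume "T \<in> Tv"
    then have T: "T \<subseteq> X" "card T = t" unfolding Tv_def by auto
    have "card {b\<in>Bv. T \<subseteq> b} \<le> card (set_mset (filter_mset (\<lambda>b. T \<subseteq> b) B))"
      unfolding Bv_def by (intro card_mono) auto
    also have "\<dots> \<le> size (filter_mset (\<lambda>b. T \<subseteq> b) B)" by (rule card_set_mset_le)
    also have "\<dots> \<le> lam" using lamb T by auto
    finally show "card {b\<in>Bv. T \<subseteq> b} \<le> lam" .
  qed
  moreover have "card Tv = (n - 1) choose (t - 1)"
    unfolding Tv_def using card_subsets_containing[OF fX v t] cX by simp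
  ultimately show ?thesis unfolding Bv_def by (simp add: mult.commute)
qed



lemma card_PiE_split:
  assumes YX: "Y \<subseteq> X"
  shows "card {f \<in> PiE X (\<lambda>_. C). P (restrict f Y) \<and> Q (restrict f (X - Y))}
       = card {g \<in> PiE Y (\<lambda>_. C). P g} * card {g \<in> PiE (X - Y) (\<lambda>_. C). Q g}"
proof -
  let ?L = "{f \<in> PiE X (\<lambda>_. C). P (restrict f Y) \<and> Q (restrict f (X - Y))}"
  let ?R = "{g \<in> PiE Y (\<lambda>_. C). P g} \<times> {g \<in> PiE (X - Y) (\<lambda>_. C). Q g}"
  let ?h = "\<lambda>f. (restrict f Y, restrict f (X - Y))"
  let ?h' = "\<lambda>p x. if x \<in> Y then fst p x else snd p x"
  have "bij_betw ?h ?L ?R"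
  proof (rule bij_betw_byWitness[where f'="?h'"])
    show "\<forall>a\<in>?L. ?h' (?h a) = a"
    proof
      fix f assume "f \<in> ?L"
      then have "f \<in> PiE X (\<lambda>_. C)" by auto
      then show "?h' (?h f) = f" using YX by (auto simp: fun_eq_iff PiE_def extensional_def)
    qed
    show "\<forall>a\<in>?R. ?h (?h' a) = a"
    proof
      fix p assume p: "p \<in> ?R"
      obtain g1 g2 where pg: "p = (g1, g2)" by (cases p)
      have g1: "g1 \<in> PiE Y (\<lambda>_. C)" and g2: "g2 \<in> PiE (X - Y) (\<lambda>_. C)" using p pg by auto
      have "restrict (?h' p) Y = g1" using g1 pg by (auto simp: fun_eq_iff PiE_def extensional_def)
      moreover have "restrict (?h' p) (X - Y) = g2" using g2 pg by (auto simp: fun_eq_iff PiE_def extensional_def)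
      ultimately show "?h (?h' p) = p" using pg by simp
    qed
    show "?h ` ?L \<subseteq> ?R" using YX by (auto simp: PiE_iff)
    show "?h' ` ?R \<subseteq> ?L"
    proof
      fix f assume "f \<in> ?h' ` ?R"
      then obtain g1 g2 where g: "g1 \<in> PiE Y (\<lambda>_. C)" "P g1" "g2 \<in> PiE (X - Y) (\<lambda>_. C)" "Q g2"
        and f: "f = ?h' (g1, g2)" by auto
      have "restrict f Y = g1" using g f by (auto simp: fun_eq_iff PiE_def extensional_def)
      moreover have "restrict f (X - Y) = g2" using g f by (auto simp: fun_eq_iff PiE_def extensional_def)
      moreover have "f \<in> PiE X (\<lambda>_. C)" using g f YX by (auto simp: PiE_def extensional_def Pi_def)
      ultimately show "f \<in> ?L" using g by simp
    qed
  qed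
  then have "card ?L = card ?R" by (rule bij_betw_same_card)
  then show ?thesis by (simp add: card_cartesian_product)
qed

lemma card_pair_colorings:
  assumes fb: "finite b" and bne: "b \<noteq> {}"
  shows "card {g \<in> PiE b (\<lambda>_. {..<s}). \<exists>i<s. g ` b \<subseteq> {i, (i + 1) mod s}} \<le> s * (2 ^ card b - 1)"
proof -
  let ?A = "{g \<in> PiE b (\<lambda>_. {..<s}). \<exists>i<s. g ` b \<subseteq> {i, (i + 1) mod s}}"
  define ci where "ci g = (SOME i. i < s \<and> i \<in> g ` b \<and> g ` b \<subseteq> {i, (i + 1) mod s})" for g
  define enc where "enc g = (ci g, {x\<in>b. g x \<noteq> ci g})" for g
  have ci: "ci g < s \<and> ci g \<in> g ` b \<and> g ` b \<subseteq> {ci g, (ci g + 1) mod s}" if "g \<in> ?A" for g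
  proof -
    have "\<exists>i<s. g ` b \<subseteq> {i, (i + 1) mod s}" using that by blast
    then obtain i where i: "i < s" "g ` b \<subseteq> {i, (i + 1) mod s}" by blast
    have "\<exists>i. i < s \<and> i \<in> g ` b \<and> g ` b \<subseteq> {i, (i + 1) mod s}"
    proof (cases "i \<in> g ` b")
      case True then show ?thesis using i by blast
    next
      case False
      then have sub: "g ` b \<subseteq> {(i + 1) mod s}" using i by auto
      have lt: "(i + 1) mod s < s" using i by simp
      have ne: "g ` b \<noteq> {}" using bne by simp
      have eq: "g ` b = {(i + 1) mod s}" using sub ne by (meson subset_singletonD)
      have "(i + 1) mod s \<in> g ` b" using eq by simp
      moreover have "g ` b \<subseteq> {(i + 1) mod s, ((i + 1) mod s + 1) mod s}" using eq by simp
      ultimately show ?thesis using lt by blast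
    qed
    then show ?thesis unfolding ci_def by (rule someI_ex)
  qed
  have "inj_on enc ?A"
  proof (rule inj_onI)
    fix g1 g2 assume g1: "g1 \<in> ?A" and g2: "g2 \<in> ?A" and e: "enc g1 = enc g2"
    have c: "ci g1 = ci g2" using arg_cong[OF e, of fst] unfolding enc_def by simp
    have W: "{x\<in>b. g1 x \<noteq> ci g1} = {x\<in>b. g2 x \<noteq> ci g2}"
      using arg_cong[OF e, of snd] unfolding enc_def by simp
    show "g1 = g2"
    proof
      fix x
      show "g1 x = g2 x"
      proof (cases "x \<in> b")
        case False
        have "g1 \<in> PiE b (\<lambda>_. {..<s})" "g2 \<in> PiE b (\<lambda>_. {..<s})" using g1 g2 by blast+
        then have "g1 \<in> extensional b" "g2 \<in> extensional b" by (simp_all add: PiE_iff)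
        then have "g1 x = undefined" "g2 x = undefined" using False by (blast intro: extensional_arb)+
        then show ?thesis by simp
      next
        case True
        have s1: "g1 ` b \<subseteq> {ci g1, (ci g1 + 1) mod s}" and s2: "g2 ` b \<subseteq> {ci g2, (ci g2 + 1) mod s}"
          using ci[OF g1] ci[OF g2] by blast+
        have "g1 x \<in> g1 ` b" "g2 x \<in> g2 ` b" using True by blast+
        then have h1: "g1 x = ci g1 \<or> g1 x = (ci g1 + 1) mod s"
          and h2: "g2 x = ci g2 \<or> g2 x = (ci g2 + 1) mod s" using s1 s2 by blast+
        have h3: "g1 x \<noteq> ci g1 \<longleftrightarrow> g2 x \<noteq> ci g2" using W True by blast
        show ?thesis using h1 h2 h3 c by metis
      qed
    qed
  qed
  moreover have "enc ` ?A \<subseteq> {..<s} \<times> (Pow b - {b})"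
  proof
    fix p assume "p \<in> enc ` ?A"
    then obtain g where g: "g \<in> ?A" and p: "p = enc g" by auto
    have "{x\<in>b. g x \<noteq> ci g} \<noteq> b" using ci[OF g] by auto
    then show "p \<in> {..<s} \<times> (Pow b - {b})" using ci[OF g] p unfolding enc_def by auto
  qed
  ultimately have "card ?A \<le> card ({..<s} \<times> (Pow b - {b}))"
    using fb by (intro card_inj_on_le) auto
  also have "\<dots> = s * (2 ^ card b - 1)" using fb by (simp add: card_cartesian_product card_Pow)
  finally show ?thesis .
qed

lemma subset_between:
  assumes "finite S" "A \<subseteq> S" "card A \<le> m" "m \<le> card S"
  shows "\<exists>R. A \<subseteq> R \<and> R \<subseteq> S \<and> card R = m"
proof -
  have "m - card A \<le> card (S - A)" using assms by (simp add: card_Diff_subset finite_subset)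
  then obtain T where T: "T \<subseteq> S - A" "card T = m - card A" "finite T" by (rule obtain_subset_with_card_n)
  have "card (A \<union> T) = card A + card T" using T assms finite_subset
    by (intro card_Un_disjoint) auto
  then show ?thesis using T assms by (intro exI[of _ "A \<union> T"]) auto
qed

lemma buffered_exists:
  assumes fS: "finite S" and l: "0 < l"
  shows "\<exists>SL SR. buffered l S SL SR"
proof (cases "int (card S) \<le> int l - 2")
  case True then show ?thesis unfolding buffered_def by auto
next
  case c1: False
  then have ge: "l - 1 \<le> card S" by linarith
  obtain SL where SL: "SL \<subseteq> S" "card SL = l - 1" "finite SL"
    using obtain_subset_with_card_n[OF ge] by blast
  show ?thesis
  proof (cases "int (card S) \<le> 2 * int l - 2")
    case True
    have "card (S - SL) \<le> l - 1" using True SL fS by (simp add: card_Diff_subset)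
    then obtain SR where SR: "S - SL \<subseteq> SR" "SR \<subseteq> S" "card SR = l - 1"
      using subset_between[OF fS, of "S - SL" "l - 1"] ge by auto
    have "SL \<union> SR = S" using SL SR by auto
    then show ?thesis using SL SR c1 True unfolding buffered_def by (intro exI[of _ SL] exI[of _ SR]) auto
  next
    case False
    have "l - 1 \<le> card (S - SL)" using False SL fS by (simp add: card_Diff_subset)
    then obtain SR where SR: "SR \<subseteq> S - SL" "card SR = l - 1" "finite SR"
      by (rule obtain_subset_with_card_n)
    have "SL \<inter> SR = {}" using SR by auto
    then show ?thesis using SL SR c1 False unfolding buffered_def by (intro exI[of _ SL] exI[of _ SR]) auto
  qed
qed




lemma restrict_image_sub: "C \<subseteq> Y \<Longrightarrow> restrict f Y ` C = f ` C"
  by auto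

theorem lemma8:
  fixes X :: "'a set" and B :: "'a set multiset" and n k t lam l :: nat
  assumes "0 < l" and "0 < lam" and "n \<ge> k" and "k > t" and "t \<ge> 2"
    and "partial_system n k t lam X B"
  shows "\<exists>U. presequencing l X B (nat \<lceil>sigma n k t lam\<rceil>) U"
proof -
  note ps = assms(6)
  have fX: "finite X" and cX: "card X = n" and bl: "\<And>b. b \<in># B \<Longrightarrow> b \<subseteq> X \<and> card b = k"
    using ps unfolding partial_system_def by auto
  have k3: "k \<ge> 3" using assms by linarith
  define C1 where "C1 = (n - 1) choose (t - 1)"
  define C2 where "C2 = (k - 1) choose (t - 1)"
  have C2pos: "C2 > 0" unfolding C2_def using assms by simp
  have C12: "C2 \<le> C1" unfolding C1_def C2_def using assms by (intro binomial_right_mono) auto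
  define r where "r = real lam * real C1 / real C2"
  define D where "D = real k * real lam * real C1 / real C2 - real k + 1"
  have Dr: "D = real k * r - real k + 1" unfolding D_def r_def by simp
  have r1: "r \<ge> 1"
  proof -
    have a: "real C2 \<le> real C1" using C12 by simp
    have "1 * real C1 \<le> real lam * real C1" using assms(2) by (intro mult_right_mono) auto
    then have "real C2 \<le> real lam * real C1" using a by simp
    then show ?thesis unfolding r_def using C2pos by (simp add: field_simps)
  qed
  have D1: "D \<ge> 1"
  proof -
    have "real k * 1 \<le> real k * r" using r1 by (intro mult_left_mono) auto
    then show ?thesis unfolding Dr by simp
  qed
  define x where "x = exp 1 * (2 ^ k - 1) * D"
  have sig: "sigma n k t lam = x powr (1 / (real k - 1))"
    unfolding sigma_def x_def D_def C1_def C2_def by simp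
  have two: "(2::real) ^ k \<ge> 1" by simp
  have two': "(2::real) ^ k - 1 > 0" using k3 by (simp add: one_less_power)
  have xpos: "x > 0" unfolding x_def using D1 two' by (intro mult_pos_pos) auto
  define s where "s = nat \<lceil>sigma n k t lam\<rceil>"
  have sigpos: "sigma n k t lam > 0" unfolding sig using xpos by simp
  have ssig: "real s \<ge> sigma n k t lam" unfolding s_def by linarith
  have spos: "s > 0" using ssig sigpos by (cases s) auto
  have "sigma n k t lam ^ (k - 1) = x"
  proof -
    have "sigma n k t lam ^ (k - 1) = x powr (real (k - 1) * (1 / (real k - 1)))"
      unfolding sig using xpos by (simp add: powr_power)
    also have "real (k - 1) * (1 / (real k - 1)) = 1" using k3 by (simp add: of_nat_diff)
    finally show ?thesis using xpos by simp
  qed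
  then have sx: "real s ^ (k - 1) \<ge> x" using ssig sigpos by (metis less_imp_le power_mono)
  define p where "p = (2 ^ k - 1) / real s ^ (k - 1)"
  have p0: "p \<ge> 0" unfolding p_def by simp
  define d where "d = nat \<lfloor>D - 1\<rfloor>"
  have dD: "real d + 1 \<le> D" unfolding d_def using D1 by linarith
  have epd: "exp 1 * p * (real d + 1) \<le> 1"
  proof -
    have "exp 1 * p * (real d + 1) \<le> exp 1 * p * D" using dD p0 by (intro mult_left_mono) auto
    also have "\<dots> = x / real s ^ (k - 1)" unfolding p_def x_def by simp
    also have "\<dots> \<le> 1" using sx xpos spos by (simp add: divide_le_eq_1)
    finally show ?thesis .
  qed
  obtain y where y: "0 \<le> y" "y < 1" "p \<le> y * (1 - y) ^ d" using exists_y[OF p0 epd] by blast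
  define \<Omega> where "\<Omega> = PiE X (\<lambda>_. {..<s})"
  define Ev where "Ev b = {f \<in> \<Omega>. \<exists>i<s. f ` b \<subseteq> {i, (i + 1) mod s}}" for b
  define I where "I = set_mset B"
  define G where "G b = {b' \<in> I. b' \<noteq> b \<and> b' \<inter> b \<noteq> {}}" for b
  have finO: "finite \<Omega>" unfolding \<Omega>_def using fX by (simp add: finite_PiE)
  have neO: "\<Omega> \<noteq> {}" unfolding \<Omega>_def using spos by (simp add: PiE_eq_empty_iff lessThan_empty_iff)
  have fI: "finite I" unfolding I_def by simp
  have finG: "finite (G b)" for b unfolding G_def using fI by simp
  have dG: "card (G b) \<le> d" if b: "b \<in> I" for b
  proof -
    have bX: "b \<subseteq> X" and cb: "card b = k" using bl b unfolding I_def by auto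
    have fb: "finite b" using bX fX finite_subset by blast
    have sub: "G b \<subseteq> (\<Union>v\<in>b. {b'\<in>set_mset B. v \<in> b'} - {b})" unfolding G_def I_def by auto
    have fU: "finite (\<Union>v\<in>b. {b'\<in>set_mset B. v \<in> b'} - {b})"
      by (rule finite_subset[of _ "set_mset B"]) auto
    have "card (G b) \<le> card (\<Union>v\<in>b. {b'\<in>set_mset B. v \<in> b'} - {b})"
      using card_mono[OF fU sub] .
    also have "\<dots> \<le> (\<Sum>v\<in>b. card ({b'\<in>set_mset B. v \<in> b'} - {b}))" using fb by (rule card_UN_le)
    finally have cG: "card (G b) \<le> (\<Sum>v\<in>b. card ({b'\<in>set_mset B. v \<in> b'} - {b}))" .
    have "real (card (G b)) \<le> (\<Sum>v\<in>b. real (card ({b'\<in>set_mset B. v \<in> b'} - {b})))"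
      unfolding of_nat_sum[symmetric] using cG by (simp only: of_nat_le_iff)
    also have "\<dots> \<le> (\<Sum>v\<in>b. r - 1)"
    proof (rule sum_mono)
      fix v assume v: "v \<in> b"
      have "b \<in> {b'\<in>set_mset B. v \<in> b'}" using v b unfolding I_def by auto
      then have cd: "card ({b'\<in>set_mset B. v \<in> b'} - {b}) = card {b'\<in>set_mset B. v \<in> b'} - 1"
        by (simp add: card_Diff_singleton)
      have "card {b'\<in>set_mset B. v \<in> b'} * C2 \<le> lam * C1"
        using degree_bound[OF ps, of v] v bX assms(5) unfolding C1_def C2_def by auto
      then have "real (card {b'\<in>set_mset B. v \<in> b'}) * real C2 \<le> real lam * real C1"
        by (metis of_nat_le_iff of_nat_mult)
      then have "real (card {b'\<in>set_mset B. v \<in> b'}) \<le> r" unfolding r_def using C2pos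
        by (simp add: field_simps)
      moreover have "card {b'\<in>set_mset B. v \<in> b'} \<ge> 1"
      proof -
        have fin1: "finite {b'\<in>set_mset B. v \<in> b'}" by simp
        have "{b'\<in>set_mset B. v \<in> b'} \<noteq> {}" using \<open>b \<in> {b'\<in>set_mset B. v \<in> b'}\<close> by blast
        then have "card {b'\<in>set_mset B. v \<in> b'} > 0" using fin1 card_gt_0_iff by blast
        then show ?thesis by simp
      qed
      ultimately show "real (card ({b'\<in>set_mset B. v \<in> b'} - {b})) \<le> r - 1"
        unfolding cd by (simp add: of_nat_diff)
    qed
    also have "\<dots> = real k * (r - 1)" using cb by simp
    also have "\<dots> = D - 1" unfolding Dr by (simp add: algebra_simps)
    finally have "real (card (G b)) \<le> D - 1" .
    then show ?thesis unfolding d_def by linarith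
  qed
  have ind: "real (card (Ev b \<inter> NN \<Omega> Ev S)) \<le> p * real (card (NN \<Omega> Ev S))"
    if b: "b \<in> I" and S: "S \<subseteq> I - G b - {b}" for b S
  proof -
    have bX: "b \<subseteq> X" and cb: "card b = k" using bl b unfolding I_def by auto
    have fb: "finite b" using bX fX finite_subset by blast
    have bne: "b \<noteq> {}" using cb k3 by auto
    have Sd: "b' \<subseteq> X - b" if "b' \<in> S" for b'
      using that S bl unfolding G_def I_def by auto
    define P where "P g = (\<exists>i<s. g ` b \<subseteq> {i, (i + 1) mod s})" for g :: "'a \<Rightarrow> nat"
    define Q where "Q g = (\<forall>b'\<in>S. \<not> (\<exists>i<s. g ` b' \<subseteq> {i, (i + 1) mod s}))" for g :: "'a \<Rightarrow> nat"
    have key: "\<And>f b'. b' \<in> S \<Longrightarrow> restrict f (X - b) ` b' = f ` b'"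
      by (rule restrict_image_sub[OF Sd])
    have Qeq: "Q (restrict f (X - b)) = (\<forall>b'\<in>S. \<not> (\<exists>i<s. f ` b' \<subseteq> {i, (i + 1) mod s}))" for f
      unfolding Q_def
    proof (rule ball_cong[OF refl])
      fix b' assume "b' \<in> S"
      then have "restrict f (X - b) ` b' = f ` b'" by (rule key)
      then show "(\<not> (\<exists>i<s. restrict f (X - b) ` b' \<subseteq> {i, (i + 1) mod s})) = (\<not> (\<exists>i<s. f ` b' \<subseteq> {i, (i + 1) mod s}))"
        by (simp only:)
    qed
    have Peq: "\<And>f. P (restrict f b) = (\<exists>i<s. f ` b \<subseteq> {i, (i + 1) mod s})"
      unfolding P_def by simp
    have NNeq: "NN \<Omega> Ev S = {f\<in>\<Omega>. \<forall>b'\<in>S. \<not> (\<exists>i<s. f ` b' \<subseteq> {i, (i + 1) mod s})}"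
      unfolding NN_def Ev_def by blast
    have e1: "Ev b \<inter> NN \<Omega> Ev S = {f \<in> PiE X (\<lambda>_. {..<s}). P (restrict f b) \<and> Q (restrict f (X - b))}"
      unfolding NNeq Peq Qeq unfolding Ev_def \<Omega>_def by blast
    have e2: "NN \<Omega> Ev S = {f \<in> PiE X (\<lambda>_. {..<s}). (\<lambda>_. True) (restrict f b) \<and> Q (restrict f (X - b))}"
      unfolding NNeq Qeq unfolding \<Omega>_def by blast
    define F where "F = card {g \<in> PiE (X - b) (\<lambda>_. {..<s}). Q g}"
    have c1: "card (Ev b \<inter> NN \<Omega> Ev S) = card {g \<in> PiE b (\<lambda>_. {..<s}). P g} * F"
      unfolding e1 F_def by (rule card_PiE_split[OF bX])
    have c2: "card (NN \<Omega> Ev S) = s ^ k * F"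
    proof -
      have "card (NN \<Omega> Ev S) = card {g \<in> PiE b (\<lambda>_. {..<s}). True} * F"
        unfolding e2 F_def by (rule card_PiE_split[OF bX])
      also have "card {g \<in> PiE b (\<lambda>_. {..<s}). True} = s ^ k" using fb cb by (simp add: card_PiE)
      finally show ?thesis .
    qed
    have cA: "card {g \<in> PiE b (\<lambda>_. {..<s}). P g} \<le> s * (2 ^ k - 1)"
      using card_pair_colorings[OF fb bne, of s] cb unfolding P_def by simp
    have "real (card (Ev b \<inter> NN \<Omega> Ev S)) \<le> real s * (2 ^ k - 1) * real F"
    proof -
      have "card (Ev b \<inter> NN \<Omega> Ev S) \<le> s * (2 ^ k - 1) * F" unfolding c1 using cA by simp
      then have "real (card (Ev b \<inter> NN \<Omega> Ev S)) \<le> real (s * (2 ^ k - 1) * F)" by linarith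
      also have "\<dots> = real s * (2 ^ k - 1) * real F" by (simp add: of_nat_diff)
      finally show ?thesis .
    qed
    also have "\<dots> = p * real (card (NN \<Omega> Ev S))"
    proof -
      have "real s ^ k = real s * real s ^ (k - 1)" using k3 by (metis Suc_diff_1 not_gr0 not_numeral_le_zero power_Suc)
      then show ?thesis unfolding c2 p_def using spos by (simp add: field_simps)
    qed
    finally show ?thesis .
  qed
  have "NN \<Omega> Ev I \<noteq> {}"
    by (rule lll[OF finO neO fI y(1) y(2) finG dG ind y(3)])
  then obtain f where fO: "f \<in> \<Omega>" and fnot: "\<And>b. b \<in># B \<Longrightarrow> f \<notin> Ev b"
    unfolding NN_def I_def by auto
  have frange: "\<And>x. x \<in> X \<Longrightarrow> f x < s" using fO unfolding \<Omega>_def by auto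
  have noblock: "\<not> b \<subseteq> Z" if "b \<in># B" "i < s" "\<And>z. z \<in> Z \<Longrightarrow> z \<in> X \<and> f z \<in> {i, (i + 1) mod s}" for b Z i
  proof
    assume "b \<subseteq> Z"
    then have "f ` b \<subseteq> {i, (i + 1) mod s}" using that by auto
    then have "f \<in> Ev b" unfolding Ev_def using fO that(2) by auto
    then show False using fnot that(1) by auto
  qed
  define Cl where "Cl i = {x \<in> X. f x = i}" for i
  define BB where "BB i = (SOME q. buffered l (Cl i) (fst q) (snd q))" for i
  have BB: "buffered l (Cl i) (fst (BB i)) (snd (BB i))" for i
  proof -
    have "finite (Cl i)" unfolding Cl_def using fX by simp
    then obtain SL SR where "buffered l (Cl i) SL SR" using buffered_exists assms(1) by blast
    then have "\<exists>q. buffered l (Cl i) (fst q) (snd q)" by (intro exI[of _ "(SL, SR)"]) simp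
    then show ?thesis unfolding BB_def by (rule someI_ex)
  qed
  have BBsub: "fst (BB i) \<subseteq> Cl i" "snd (BB i) \<subseteq> Cl i" for i using BB[of i] unfolding buffered_def by auto
  define U where "U i = (Cl i, fst (BB i), snd (BB i))" for i
  have "presequencing l X B s U"
    unfolding presequencing_def
  proof (intro conjI allI impI)
    show "buffered l (fst (U i)) (fst (snd (U i))) (snd (snd (U i)))" for i
      unfolding U_def using BB by simp
    show "(\<Union>i<s. fst (U i)) = X" unfolding U_def Cl_def using frange by auto
    show "fst (U i) \<inter> fst (U j) = {}" if "i \<noteq> j" for i j unfolding U_def Cl_def using that by auto
    show "independent B (fst (U i))" if "i < s" for i
      unfolding independent_def U_def
    proof (intro ballI)
      fix b assume "b \<in># B"
      then show "\<not> b \<subseteq> fst (Cl i, fst (BB i), snd (BB i))"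
        using noblock[of b i "Cl i"] that unfolding Cl_def by auto
    qed
    show "independent B (snd (snd (U i)) \<union> fst (snd (U ((i + 1) mod s))))" if "i < s" for i
      unfolding independent_def U_def
    proof (intro ballI)
      fix b assume bB: "b \<in># B"
      have zz: "\<And>z. z \<in> snd (BB i) \<union> fst (BB ((i + 1) mod s)) \<Longrightarrow> z \<in> X \<and> f z \<in> {i, (i + 1) mod s}"
        using BBsub[of i] BBsub[of "(i + 1) mod s"] unfolding Cl_def by auto
      have "\<not> b \<subseteq> snd (BB i) \<union> fst (BB ((i + 1) mod s))" by (rule noblock[OF bB that zz])
      then show "\<not> b \<subseteq> snd (snd (Cl i, fst (BB i), snd (BB i))) \<union>
          fst (snd (Cl ((i + 1) mod s), fst (BB ((i + 1) mod s)), snd (BB ((i + 1) mod s))))"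
        by simp
    qed
  qed
  then have "presequencing l X B (nat \<lceil>sigma n k t lam\<rceil>) U" unfolding s_def .
  then show ?thesis by (rule exI[of _ U])
qed


end
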